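(* Let $m\ge3$, $X=\{0,1,\dots,m-1\}$, $a_m=(0\,1\,\cdots\,m{-}1)$ and $a_2=(0\,1)$. Let $G=\langle A\cup B\rangle$ be a CS group with rooted group $A=\mathrm{Sym}(X)$ acting naturally, and suppose $B$ has a generating set $S$ such that, among the family of sections $(b|_x)_{b\in S,\,x\in\dot X}$, exactly one entry equals $a_m$, exactly two entries equal $a_2$, and all other entries are trivial. Then $G$ is not periodic.
   Context: $X^*$ is the free monoid on $X$ viewed as a rooted tree with distinguished letter $0$, $\dot X=X\setminus\{0\}$; $\mathrm{Aut}(X^* )$ acts on the right; sections are defined by $(u\star v).g=u.g\star v.(g|_u)$; permutations of $X$ are rooted automorphisms; $\mathrm{St}(1)$ is the first layer stabiliser. A CS group is $\langle A\cup B\rangle$ with $A\le\mathrm{Sym}(X)$ transitive and $B\le\mathrm{St}(1)$ such that $b|_0=b$ for all $b\in B$ and the elements $b|_x$ ($b\in B$, $x\in\dot X$) lie in $A$ and generate $A$. Periodic: every element has finite order. *)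

theory Defs
  imports "HOL-Combinatorics.Permutations"
begin

text \<open>The action is a right action, so u.(gh) = h (g u), i.e. gh is  h \<circ> g.\<close>

definition words :: "nat \<Rightarrow> nat list set" where
  "words m = {w. set w \<subseteq> {..<m}}"

definition is_aut :: "nat \<Rightarrow> (nat list \<Rightarrow> nat list) \<Rightarrow> bool" where
  "is_aut m g \<longleftrightarrow> bij_betw g (words m) (words m)
     \<and> (\<forall>w\<in>words m. length (g w) = length w)
     \<and> (\<forall>u\<in>words m. \<forall>v\<in>words m. take (length u) (g (u @ v)) = g u)
     \<and> (\<forall>w. w \<notin> words m \<longrightarrow> g w = w)"

definition Aut :: "nat \<Rightarrow> (nat list \<Rightarrow> nat list) set" where
  "Aut m = {g. is_aut m g}"

text \<open>Section g|_u, defined by (u v).g = (u.g)(v.(g|_u)).\<close>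
definition sec :: "nat \<Rightarrow> (nat list \<Rightarrow> nat list) \<Rightarrow> nat list \<Rightarrow> (nat list \<Rightarrow> nat list)" where
  "sec m g u = (\<lambda>v. if v \<in> words m then drop (length u) (g (u @ v)) else v)"

definition rooted :: "nat \<Rightarrow> (nat \<Rightarrow> nat) \<Rightarrow> (nat list \<Rightarrow> nat list)" where
  "rooted m \<sigma> = (\<lambda>w. if w \<in> words m then (case w of [] \<Rightarrow> [] | x # v \<Rightarrow> \<sigma> x # v) else w)"

definition SymRooted :: "nat \<Rightarrow> (nat list \<Rightarrow> nat list) set" where
  "SymRooted m = {rooted m \<sigma> | \<sigma>. \<sigma> permutes {..<m}}"

definition St1 :: "nat \<Rightarrow> (nat list \<Rightarrow> nat list) set" where
  "St1 m = {g \<in> Aut m. \<forall>x<m. g [x] = [x]}"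

inductive_set gen :: "('a \<Rightarrow> 'a) set \<Rightarrow> ('a \<Rightarrow> 'a) set" for S where
  gen_id: "id \<in> gen S"
| gen_mult: "g \<in> gen S \<Longrightarrow> s \<in> S \<Longrightarrow> s \<circ> g \<in> gen S"
| gen_inv: "g \<in> gen S \<Longrightarrow> s \<in> S \<Longrightarrow> inv s \<circ> g \<in> gen S"

definition periodic :: "('a \<Rightarrow> 'a) set \<Rightarrow> bool" where
  "periodic G \<longleftrightarrow> (\<forall>g\<in>G. \<exists>n>0. g ^^ n = id)"

definition a_cyc :: "nat \<Rightarrow> (nat list \<Rightarrow> nat list)" where
  "a_cyc m = rooted m (\<lambda>x. if x < m then (x + 1) mod m else x)"

definition a_two :: "nat \<Rightarrow> (nat list \<Rightarrow> nat list)" where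
  "a_two m = rooted m (\<lambda>x. if x = 0 then 1 else if x = 1 then 0 else x)"

end

theory Submission
  imports Defs
begin


definition cc :: "nat \<Rightarrow> nat \<Rightarrow> nat" where
  "cc m = (\<lambda>x. if x < m then (x + 1) mod m else x)"
definition tt :: "nat \<Rightarrow> nat" where
  "tt = (\<lambda>x. if x = 0 then 1 else if x = 1 then 0 else x)"

fun pfold :: "(nat \<Rightarrow> nat \<Rightarrow> nat) \<Rightarrow> (nat \<Rightarrow> nat) \<Rightarrow> nat \<Rightarrow> nat \<Rightarrow> nat" where
  "pfold p y 0 = id"
| "pfold p y (Suc j) = p (y (Suc j)) \<circ> pfold p y j"

lemma words_Cons[simp]: "(x # v \<in> words m) = (x < m \<and> v \<in> words m)"
  by (auto simp: words_def)

lemma words_Nil[simp]: "[] \<in> words m" by (simp add: words_def)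

lemma rooted_Cons: "x < m \<Longrightarrow> v \<in> words m \<Longrightarrow> rooted m f (x # v) = f x # v"
  by (simp add: rooted_def)

lemma rooted_nw: "w \<notin> words m \<Longrightarrow> rooted m f w = w"
  by (simp add: rooted_def)

lemma rooted_words: "v \<in> words m \<Longrightarrow> \<forall>z<m. f z < m \<Longrightarrow> rooted m f v \<in> words m"
  by (cases v) (auto simp: rooted_def)

lemma rooted_idon: "v \<in> words m \<Longrightarrow> \<forall>z<m. f z = z \<Longrightarrow> rooted m f v = v"
  by (cases v) (auto simp: rooted_def)

lemma rooted_cong: "v \<in> words m \<Longrightarrow> \<forall>z<m. f z = g z \<Longrightarrow> rooted m f v = rooted m g v"
  by (cases v) (auto simp: rooted_def)

lemma rooted_comp: "v \<in> words m \<Longrightarrow> \<forall>z<m. g z < m \<Longrightarrow> rooted m f (rooted m g v) = rooted m (f \<circ> g) v"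
  by (cases v) (auto simp: rooted_def)

lemma rooted_comp_fun: "\<forall>z<m. g z < m \<Longrightarrow> rooted m f \<circ> rooted m g = rooted m (f \<circ> g)"
proof
  fix w assume "\<forall>z<m. g z < m"
  then show "(rooted m f \<circ> rooted m g) w = rooted m (f \<circ> g) w"
    by (cases "w \<in> words m") (auto simp: rooted_comp rooted_nw)
qed

lemma pf_m: "\<forall>x z. z<m \<longrightarrow> p x z < m \<Longrightarrow> z < m \<Longrightarrow> pfold p y j z < m"
  by (induction j arbitrary: z) auto

lemma pf_seg:
  assumes "i \<le> j" "\<forall>k. i<k \<and> k\<le>j \<longrightarrow> (\<forall>z<m. p (y k) z = z)" "\<forall>x z. z<m \<longrightarrow> p x z < m"
  shows "\<forall>z<m. pfold p y j z = pfold p y i z"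
  using assms(1,2)
proof (induction j)
  case 0 then show ?case by simp
next
  case (Suc j)
  show ?case
  proof (cases "i = Suc j")
    case True then show ?thesis by simp
  next
    case False
    then have ij: "i \<le> j" using Suc.prems by simp
    have IH: "\<forall>z<m. pfold p y j z = pfold p y i z" using Suc.IH ij Suc.prems(2) by auto
    show ?thesis
    proof (intro allI impI)
      fix z assume z: "z < m"
      have "pfold p y j z < m" using pf_m[OF assms(3) z] .
      then have "p (y (Suc j)) (pfold p y j z) = pfold p y j z"
        using Suc.prems(2) ij by auto
      then show "pfold p y (Suc j) z = pfold p y i z" using IH z by simp
    qed
  qed
qed

lemma pf_one:
  assumes "i < q" "q \<le> N" "\<forall>k. i<k \<and> k\<le>N \<and> k \<noteq> q \<longrightarrow> (\<forall>z<m. p (y k) z = z)"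
    "\<forall>x z. z<m \<longrightarrow> p x z < m"
  shows "\<forall>z<m. pfold p y N z = p (y q) (pfold p y i z)"
proof (intro allI impI)
  fix z assume z: "z < m"
  have 1: "pfold p y N z = pfold p y q z"
    using pf_seg[where i=q and j=N and p=p and y=y and m=m] assms z by auto
  obtain q' where q': "q = Suc q'" using assms(1) by (cases q) auto
  have 2: "pfold p y q' z = pfold p y i z"
    using pf_seg[where i=i and j=q' and p=p and y=y and m=m] assms z q' by auto
  show "pfold p y N z = p (y q) (pfold p y i z)" using 1 2 q' by simp
qed


definition noper :: "(nat list \<Rightarrow> nat list) \<Rightarrow> bool" where
  "noper g \<longleftrightarrow> (\<forall>k>0. g ^^ k \<noteq> id)"

lemma core:
  fixes b :: "nat list \<Rightarrow> nat list" and al :: "nat \<Rightarrow> nat"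
  assumes hb0: "\<forall>v\<in>words m. b (0#v) = 0 # b v"
    and hbx: "\<forall>x\<in>{1..<m}. \<forall>v\<in>words m. b (x#v) = x # rooted m (p x) v"
    and hbw: "\<forall>v\<in>words m. b v \<in> words m"
    and hbn: "\<forall>w. w \<notin> words m \<longrightarrow> b w = w"
    and hp: "\<forall>x z. z<m \<longrightarrow> p x z < m"
    and hal: "\<forall>z<m. al z < m"
    and y0: "y 0 = 0" and yn: "y n = 0" and ynz: "\<forall>j. 0<j \<and> j<n \<longrightarrow> y j \<noteq> 0"
    and ym: "\<forall>j\<le>n. y j < m" and yal: "\<forall>j<n. al (y j) = y (Suc j)"
    and n2: "n \<ge> 2"
    and hP: "\<forall>z<m. pfold p y (n-1) z = al z"
  shows "noper (b \<circ> rooted m al)"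
proof -
  define g where "g = b \<circ> rooted m al"
  have gw: "\<forall>v\<in>words m. g v \<in> words m"
    using hbw rooted_words hal by (simp add: g_def)
  have gn: "\<forall>w. w\<notin>words m \<longrightarrow> g w = w"
    using hbn by (simp add: g_def rooted_nw)
  have gx: "g (x#v) = al x # (if al x = 0 then b v else rooted m (p (al x)) v)"
    if "x < m" "v \<in> words m" for x v
  proof -
    have "g (x#v) = b (al x # v)" using that by (simp add: g_def rooted_Cons)
    also have "\<dots> = al x # (if al x = 0 then b v else rooted m (p (al x)) v)"
      using hb0 hbx that hal by auto
    finally show ?thesis .
  qed
  have gqw: "\<And>v. v \<in> words m \<Longrightarrow> (g^^q) v \<in> words m" for q
    by (induction q) (auto simp: gw)
  have gqn: "\<And>w. w \<notin> words m \<Longrightarrow> (g^^q) w = w" for q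
    by (induction q) (auto simp: gn)
  have orb: "j < n \<Longrightarrow> v \<in> words m \<Longrightarrow> (g^^j) (0#v) = y j # rooted m (pfold p y j) v" for j v
  proof (induction j)
    case 0 then show ?case using y0 by (simp add: rooted_idon)
  next
    case (Suc j)
    then have jn: "j < n" by simp
    have w1: "rooted m (pfold p y j) v \<in> words m"
      using rooted_words[OF Suc.prems(2)] pf_m[OF hp] by blast
    have "(g^^Suc j) (0#v) = g (y j # rooted m (pfold p y j) v)" using Suc jn by simp
    also have "\<dots> = y (Suc j) # rooted m (p (y (Suc j))) (rooted m (pfold p y j) v)"
      using gx[of "y j", OF _ w1] ym jn yal ynz Suc.prems by auto
    also have "\<dots> = y (Suc j) # rooted m (pfold p y (Suc j)) v"
      using rooted_comp[OF Suc.prems(2)] pf_m[OF hp] by simp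
    finally show ?case .
  qed
  have full: "(g^^n) (0#v) = 0 # g v" if v: "v \<in> words m" for v
  proof -
    obtain n' where n': "n = Suc n'" using n2 by (cases n) auto
    have w1: "rooted m (pfold p y n') v \<in> words m"
      using rooted_words[OF v] pf_m[OF hp] by blast
    have "(g^^n) (0#v) = g (y n' # rooted m (pfold p y n') v)" using orb[of n' v] v n' by simp
    also have "\<dots> = 0 # b (rooted m (pfold p y n') v)"
      using gx[of "y n'", OF _ w1] ym yal yn n' by auto
    also have "rooted m (pfold p y n') v = rooted m al v"
      using rooted_cong[OF v] hP n' by simp
    also have "b (rooted m al v) = g v" by (simp add: g_def)
    finally show ?thesis .
  qed
  have mult: "v \<in> words m \<Longrightarrow> (g^^(q*n)) (0#v) = 0 # (g^^q) v" for q v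
  proof (induction q arbitrary: v)
    case 0 then show ?case by simp
  next
    case (Suc q)
    have "(g^^(Suc q * n)) (0#v) = (g^^n) ((g^^(q*n)) (0#v))"
      by (simp add: funpow_add)
    also have "\<dots> = (g^^n) (0 # (g^^q) v)" using Suc by simp
    also have "\<dots> = 0 # g ((g^^q) v)" using full gqw Suc.prems by simp
    finally show ?case by simp
  qed
  have "g^^k \<noteq> id" if "0 < k" for k
    using that
  proof (induction k rule: less_induct)
    case (less k)
    show ?case
    proof
      assume gk: "g^^k = id"
      define q where "q = k div n"
      define r where "r = k mod n"
      have kqr: "k = r + q * n" by (simp add: q_def r_def)
      have rn: "r < n" using n2 by (simp add: r_def)
      have "(g^^k) [0] = (g^^r) ((g^^(q*n)) (0#[]))" using kqr by (simp add: funpow_add)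
      also have "\<dots> = (g^^r) (0 # (g^^q) [])" using mult by simp
      also have "\<dots> = y r # rooted m (pfold p y r) ((g^^q) [])"
        using orb[OF rn] gqw by simp
      finally have "y r = 0" using gk by simp
      then have r0: "r = 0" using ynz rn by auto
      then have qpos: "q > 0" using less.prems kqr by simp
      have qk: "q < k" using kqr r0 n2 qpos by simp
      have "g^^q = id"
      proof
        fix w show "(g^^q) w = id w"
        proof (cases "w \<in> words m")
          case True
          have "(g^^k) (0#w) = 0 # (g^^q) w" using mult[OF True] kqr r0 by simp
          then show ?thesis using gk by simp
        next
          case False then show ?thesis using gqn by simp
        qed
      qed
      then show False using less.IH[OF qk qpos] by simp
    qed
  qed
  then show ?thesis by (simp add: noper_def g_def)
qed


lemma pf_1:
  assumes "0 < ia" "ia \<le> N" "\<forall>k. 0<k \<and> k\<le>N \<and> k \<noteq> ia \<longrightarrow> (\<forall>z<m. p (y k) z = z)"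
    "\<forall>x z. z<m \<longrightarrow> p x z < m"
  shows "\<forall>z<m. pfold p y N z = p (y ia) z"
  using pf_one[where i=0 and q=ia and N=N and p=p and y=y and m=m] assms by auto

lemma pf_2:
  assumes "0 < ia" "ia < ib" "ib \<le> N"
    "\<forall>k. 0<k \<and> k\<le>N \<and> k \<noteq> ia \<and> k \<noteq> ib \<longrightarrow> (\<forall>z<m. p (y k) z = z)"
    "\<forall>x z. z<m \<longrightarrow> p x z < m"
  shows "\<forall>z<m. pfold p y N z = p (y ib) (p (y ia) z)"
proof (intro allI impI)
  fix z assume z: "z < m"
  have a: "pfold p y N z = p (y ib) (pfold p y ia z)"
    using pf_one[where i=ia and q=ib and N=N and p=p and y=y and m=m] assms z by auto
  have b: "pfold p y ia z = p (y ia) z"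
    using pf_1[where ia=ia and N=ia and p=p and y=y and m=m] assms z by auto
  show "pfold p y N z = p (y ib) (p (y ia) z)" using a b by simp
qed

lemma pf_3:
  assumes "0 < ia" "ia < ib" "ib < ic" "ic \<le> N"
    "\<forall>k. 0<k \<and> k\<le>N \<and> k \<noteq> ia \<and> k \<noteq> ib \<and> k \<noteq> ic \<longrightarrow> (\<forall>z<m. p (y k) z = z)"
    "\<forall>x z. z<m \<longrightarrow> p x z < m"
  shows "\<forall>z<m. pfold p y N z = p (y ic) (p (y ib) (p (y ia) z))"
proof (intro allI impI)
  fix z assume z: "z < m"
  have a: "pfold p y N z = p (y ic) (pfold p y ib z)"
    using pf_one[where i=ib and q=ic and N=N and p=p and y=y and m=m] assms z by auto
  have b: "pfold p y ib z = p (y ib) (p (y ia) z)"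
    using pf_2[where ia=ia and ib=ib and N=ib and p=p and y=y and m=m] assms z by auto
  show "pfold p y N z = p (y ic) (p (y ib) (p (y ia) z))" using a b by simp
qed

definition bgood :: "nat \<Rightarrow> (nat list \<Rightarrow> nat list) \<Rightarrow> (nat \<Rightarrow> nat \<Rightarrow> nat) \<Rightarrow> bool" where
  "bgood m b p \<longleftrightarrow> (\<forall>v\<in>words m. b (0#v) = 0 # b v)
    \<and> (\<forall>x\<in>{1..<m}. \<forall>v\<in>words m. b (x#v) = x # rooted m (p x) v)
    \<and> (\<forall>v\<in>words m. b v \<in> words m)
    \<and> (\<forall>w. w \<notin> words m \<longrightarrow> b w = w)
    \<and> (\<forall>x z. z<m \<longrightarrow> p x z < m)"

lemma cc_lt: "z < m \<Longrightarrow> cc m z < m" by (simp add: cc_def)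
lemma tt_lt: "z < m \<Longrightarrow> 3 \<le> m \<Longrightarrow> tt z < m" by (simp add: tt_def)

definition ytct :: "nat \<Rightarrow> nat \<Rightarrow> nat" where
  "ytct m j = (if j = 0 then 0 else if j \<le> m - 2 then j + 1 else if j = m - 1 then 1 else 0)"

lemma case_c:
  assumes "bgood m b p" "m \<ge> 3" "\<forall>z<m. pfold p (\<lambda>j. j mod m) (m-1) z = cc m z"
  shows "noper (b \<circ> rooted m (cc m))"
  apply (rule core[where y="\<lambda>j. j mod m" and n=m and p=p])
  using assms by (auto simp: bgood_def cc_lt cc_def mod_Suc_eq)

lemma case_t:
  assumes "bgood m b p" "m \<ge> 3" "\<forall>z<m. p 1 z = tt z"
  shows "noper (b \<circ> rooted m tt)"
  apply (rule core[where y="\<lambda>j. if j = 1 then 1 else 0" and n=2 and p=p])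
  using assms by (auto simp: bgood_def tt_def)

lemma case_tct:
  assumes "bgood m b p" "m \<ge> 3" "\<forall>z<m. pfold p (ytct m) (m-1) z = tt (cc m (tt z))"
  shows "noper (b \<circ> rooted m (tt \<circ> cc m \<circ> tt))"
proof -
  have yal: "(tt \<circ> cc m \<circ> tt) (ytct m j) = ytct m (Suc j)" if jm: "j < m" for j
  proof -
    consider "j = 0" | "0 < j \<and> j < m - 2" | "j = m - 2" | "j = m - 1" using jm assms(2) by (cases "j = 0"; cases "j < m - 2"; cases "j = m - 2"; auto)
    then show ?thesis
    proof cases
      case 1 then show ?thesis using assms(2) by (simp add: tt_def cc_def ytct_def)
    next
      case 2
      then have "Suc (Suc j) mod m = Suc (Suc j)" by (intro mod_less) linarith
      moreover have "Suc j < m" using 2 by linarith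
      ultimately show ?thesis using 2 assms(2) by (simp add: tt_def cc_def ytct_def)
    next
      case 3
      then have "ytct m j = m - 1" "ytct m (Suc j) = 1" using assms(2) by (auto simp: ytct_def)
      moreover have "cc m (m - 1) = 0" using assms(2) by (simp add: cc_def)
      moreover have "tt (m - 1) = m - 1" using assms(2) by (simp add: tt_def)
      ultimately show ?thesis by (simp add: tt_def)
    next
      case 4
      then have "ytct m j = 1" "ytct m (Suc j) = 0" using assms(2) by (auto simp: ytct_def)
      then show ?thesis using assms(2) by (simp add: tt_def cc_def)
    qed
  qed
  show ?thesis
  apply (rule core[where y="ytct m" and n=m and p=p])
  using assms yal by (auto simp: bgood_def tt_def cc_def ytct_def)
qed


lemma tt_tt[simp]: "tt (tt z) = z" by (simp add: tt_def)

lemma one_c: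
  assumes "bgood m b p" "m \<ge> 3" "x \<in> {1..<m}" "\<forall>z<m. p x z = cc m z"
    "\<forall>k\<in>{1..<m}. k \<noteq> x \<longrightarrow> (\<forall>z<m. p k z = z)"
  shows "noper (b \<circ> rooted m (cc m))"
proof (rule case_c[OF assms(1,2)])
  have hp: "\<forall>x z. z<m \<longrightarrow> p x z < m" using assms(1) by (simp add: bgood_def)
  have "\<forall>z<m. pfold p (\<lambda>j. j mod m) (m-1) z = p (x mod m) z"
    apply (rule pf_1[OF _ _ _ hp]) using assms(3,5) by auto
  then show "\<forall>z<m. pfold p (\<lambda>j. j mod m) (m-1) z = cc m z" using assms(3,4) by simp
qed

lemma two_c:
  assumes "bgood m b p" "m \<ge> 3" "0 < q1" "q1 < q2" "q2 < m" "\<forall>z<m. p q2 (p q1 z) = cc m z"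
    "\<forall>k\<in>{1..<m}. k \<noteq> q1 \<and> k \<noteq> q2 \<longrightarrow> (\<forall>z<m. p k z = z)"
  shows "noper (b \<circ> rooted m (cc m))"
proof (rule case_c[OF assms(1,2)])
  have hp: "\<forall>x z. z<m \<longrightarrow> p x z < m" using assms(1) by (simp add: bgood_def)
  have "\<forall>z<m. pfold p (\<lambda>j. j mod m) (m-1) z = p (q2 mod m) (p (q1 mod m) z)"
    apply (rule pf_2[OF _ _ _ _ hp]) using assms(3-5,7) by auto
  then show "\<forall>z<m. pfold p (\<lambda>j. j mod m) (m-1) z = cc m z" using assms(3-6) by simp
qed

lemma tri0:
  assumes "bgood m b p" "m \<ge> 3" "x1 \<in> {1..<m}" "x2 \<in> {2..<m}" "x3 \<in> {2..<m}"
    "x1 \<noteq> x2" "x1 \<noteq> x3" "x2 < x3"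
    "\<forall>z<m. p x1 z = cc m z" "\<forall>z<m. p x2 z = tt z" "\<forall>z<m. p x3 z = tt z"
    "\<forall>k\<in>{1..<m}. k \<noteq> x1 \<and> k \<noteq> x2 \<and> k \<noteq> x3 \<longrightarrow> (\<forall>z<m. p k z = z)"
  shows "noper (b \<circ> rooted m (cc m)) \<or> noper (b \<circ> rooted m (tt \<circ> cc m \<circ> tt))"
proof -
  have hp: "\<forall>x z. z<m \<longrightarrow> p x z < m" using assms(1) by (simp add: bgood_def)
  consider "x1 < x2" | "x3 < x1" | "x2 < x1 \<and> x1 < x3" using assms(6,7) by linarith
  then show ?thesis
  proof cases
    case 1
    have "\<forall>z<m. pfold p (\<lambda>j. j mod m) (m-1) z = p (x3 mod m) (p (x2 mod m) (p (x1 mod m) z))"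
      apply (rule pf_3[OF _ _ _ _ _ hp]) using 1 assms(3-8,12) by auto
    then have "\<forall>z<m. pfold p (\<lambda>j. j mod m) (m-1) z = cc m z" using assms(2-5,9-11) by (simp add: cc_lt tt_lt)
    then show ?thesis using case_c[OF assms(1,2)] by blast
  next
    case 2
    have "\<forall>z<m. pfold p (\<lambda>j. j mod m) (m-1) z = p (x1 mod m) (p (x3 mod m) (p (x2 mod m) z))"
      apply (rule pf_3[OF _ _ _ _ _ hp]) using 2 assms(3-8,12) by auto
    then have "\<forall>z<m. pfold p (\<lambda>j. j mod m) (m-1) z = cc m z" using assms(2-5,9-11) by (simp add: tt_lt)
    then show ?thesis using case_c[OF assms(1,2)] by blast
  next
    case 3
    have yv: "ytct m (x - 1) = x" if "x \<in> {2..<m}" for x using that by (auto simp: ytct_def)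
    have "\<forall>z<m. pfold p (ytct m) (m-1) z = p (ytct m (x3-1)) (p (ytct m (x1-1)) (p (ytct m (x2-1)) z))"
    proof (rule pf_3[OF _ _ _ _ _ hp])
      show "\<forall>k. 0 < k \<and> k \<le> m - 1 \<and> k \<noteq> x2 - 1 \<and> k \<noteq> x1 - 1 \<and> k \<noteq> x3 - 1 \<longrightarrow>
          (\<forall>z<m. p (ytct m k) z = z)"
      proof (intro allI impI)
        fix k z assume k: "0 < k \<and> k \<le> m - 1 \<and> k \<noteq> x2 - 1 \<and> k \<noteq> x1 - 1 \<and> k \<noteq> x3 - 1" and z: "z < m"
        show "p (ytct m k) z = z"
        proof (cases "k = m - 1")
          case True
          then have "ytct m k = 1" using assms(2) by (simp add: ytct_def)
          then show ?thesis using assms(2,12) 3 assms(4) z by auto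
        next
          case False
          then have "k \<le> m - 2" using k by linarith
          then have "ytct m k = k + 1" using k by (simp add: ytct_def)
          moreover have "Suc k \<in> {1..<m}" "Suc k \<noteq> x1" "Suc k \<noteq> x2" "Suc k \<noteq> x3"
            using k False 3 assms(3-5) by auto
          ultimately show ?thesis using assms(12) z by auto
        qed
      qed
    qed (use 3 assms(3-5,8) in auto)
    then have "\<forall>z<m. pfold p (ytct m) (m-1) z = tt (cc m (tt z))"
      using yv assms(3-5,9-11) 3 by (simp add: tt_lt cc_lt)
    then show ?thesis using case_tct[OF assms(1,2)] by blast
  qed
qed



lemma bgood_comp:
  assumes "bgood m s p" "bgood m s' p'"
  shows "bgood m (s \<circ> s') (\<lambda>x. p x \<circ> p' x)"
proof -
  have hp': "\<forall>z<m. p' x z < m" for x using assms(2) by (simp add: bgood_def)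
  have s: "\<forall>v\<in>words m. s (0#v) = 0 # s v" "\<forall>x\<in>{1..<m}. \<forall>v\<in>words m. s (x#v) = x # rooted m (p x) v"
    "\<forall>v\<in>words m. s v \<in> words m" "\<forall>w. w \<notin> words m \<longrightarrow> s w = w" "\<forall>x z. z<m \<longrightarrow> p x z < m"
    using assms(1) unfolding bgood_def by blast+
  have s': "\<forall>v\<in>words m. s' (0#v) = 0 # s' v" "\<forall>x\<in>{1..<m}. \<forall>v\<in>words m. s' (x#v) = x # rooted m (p' x) v"
    "\<forall>v\<in>words m. s' v \<in> words m" "\<forall>w. w \<notin> words m \<longrightarrow> s' w = w" "\<forall>x z. z<m \<longrightarrow> p' x z < m"
    using assms(2) unfolding bgood_def by blast+
  have 1: "\<forall>v\<in>words m. (s \<circ> s') (0#v) = 0 # (s \<circ> s') v" using s s' by simp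
  have 2: "\<forall>x\<in>{1..<m}. \<forall>v\<in>words m. (s \<circ> s') (x#v) = x # rooted m (p x \<circ> p' x) v"
  proof (intro ballI)
    fix x v assume x: "x \<in> {1..<m}" and v: "v \<in> words m"
    have w: "rooted m (p' x) v \<in> words m" using rooted_words[OF v hp'] .
    have "(s \<circ> s') (x#v) = s (x # rooted m (p' x) v)" using s'(2) x v by simp
    also have "\<dots> = x # rooted m (p x) (rooted m (p' x) v)" using s(2) x w by blast
    also have "\<dots> = x # rooted m (p x \<circ> p' x) v" using rooted_comp[OF v hp'] by simp
    finally show "(s \<circ> s') (x#v) = x # rooted m (p x \<circ> p' x) v" .
  qed
  have 3: "\<forall>v\<in>words m. (s \<circ> s') v \<in> words m" using s(3) s'(3) by simp
  have 4: "\<forall>w. w \<notin> words m \<longrightarrow> (s \<circ> s') w = w" using s(4) s'(4) by simp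
  have 5: "\<forall>x z. z<m \<longrightarrow> (p x \<circ> p' x) z < m" using s(5) s'(5) by simp
  show ?thesis unfolding bgood_def using 1 2 3 4 5 by blast
qed

lemma aut_props:
  assumes "b \<in> Aut m"
  shows "\<forall>v\<in>words m. b v \<in> words m" "\<forall>w. w \<notin> words m \<longrightarrow> b w = w"
  using assms by (auto simp: Aut_def is_aut_def bij_betw_def)

lemma sect:
  assumes "b \<in> St1 m" "x < m" "v \<in> words m"
  shows "b (x # v) = x # sec m b [x] v"
proof -
  have a: "is_aut m b" "b [x] = [x]" using assms by (auto simp: St1_def Aut_def)
  have xw: "[x] \<in> words m" using assms by simp
  have pre: "\<forall>u\<in>words m. \<forall>v\<in>words m. take (length u) (b (u @ v)) = b u"
    using a(1) unfolding is_aut_def by blast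
  have len: "\<forall>w\<in>words m. length (b w) = length w"
    using a(1) unfolding is_aut_def by blast
  have t: "take 1 (b (x # v)) = [x]" using pre xw assms(3) a(2) by fastforce
  have "length (b (x # v)) = Suc (length v)" using len assms by fastforce
  then obtain h r where hr: "b (x # v) = h # r" by (cases "b (x # v)") auto
  then have "h = x" using t by simp
  then show ?thesis using hr assms(3) by (simp add: sec_def)
qed

lemma bgood_of:
  assumes "b \<in> St1 m" "sec m b [0] = b" "m > 0"
    "\<forall>x\<in>{1..<m}. \<forall>v\<in>words m. sec m b [x] v = rooted m (p x) v"
    "\<forall>x z. z<m \<longrightarrow> p x z < m"
  shows "bgood m b p"
proof -
  have ba: "b \<in> Aut m" using assms(1) by (simp add: St1_def)
  have 1: "\<forall>v\<in>words m. b (0#v) = 0 # b v" using sect[OF assms(1)] assms(2,3) by simp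
  have 2: "\<forall>x\<in>{1..<m}. \<forall>v\<in>words m. b (x#v) = x # rooted m (p x) v"
    using sect[OF assms(1)] assms(4) by simp
  show ?thesis unfolding bgood_def using 1 2 aut_props[OF ba] assms(5) by blast
qed

lemma noper_G: "noper g \<Longrightarrow> g \<in> G \<Longrightarrow> \<not> periodic G"
  unfolding noper_def periodic_def by blast

lemma a_cyc_eq: "a_cyc m = rooted m (cc m)" by (simp add: a_cyc_def cc_def)
lemma a_two_eq: "a_two m = rooted m tt" by (simp add: a_two_def tt_def)

lemma a_neq:
  assumes "m \<ge> 3"
  shows "a_cyc m \<noteq> a_two m" "a_cyc m \<noteq> id" "a_two m \<noteq> id"
proof -
  have w: "[1] \<in> words m" using assms by simp
  have "a_cyc m [1] = [2]" using assms by (simp add: a_cyc_eq rooted_Cons[OF _ words_Nil] cc_def)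
  moreover have "a_two m [1] = [0]" using assms by (simp add: a_two_eq rooted_Cons[OF _ words_Nil] tt_def)
  ultimately show "a_cyc m \<noteq> a_two m" "a_cyc m \<noteq> id" "a_two m \<noteq> id" by auto
qed

lemma gen_in: "s \<in> S \<Longrightarrow> s \<in> gen S"
  using gen.gen_mult[OF gen.gen_id] by fastforce

lemma gen_comp2: "s \<in> S \<Longrightarrow> t \<in> S \<Longrightarrow> s \<circ> t \<in> gen S"
  using gen.gen_mult[OF gen_in] by blast



theorem mainTheorem18:
  fixes m :: nat and S B :: "(nat list \<Rightarrow> nat list) set"
  assumes m3: "m \<ge> 3"
    and B_gen: "B = gen S"
    and B_aut: "B \<subseteq> Aut m"
    and B_St1: "B \<subseteq> St1 m"
    and B_sec0: "\<forall>b\<in>B. sec m b [0] = b"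
    and B_secA: "\<forall>b\<in>B. \<forall>x\<in>{1..<m}. sec m b [x] \<in> SymRooted m"
    and B_secgen: "gen {sec m b [x] | b x. b \<in> B \<and> x \<in> {1..<m}} = SymRooted m"
    and S_cyc: "card {(b, x). b \<in> S \<and> x \<in> {1..<m} \<and> sec m b [x] = a_cyc m} = 1"
    and S_two: "card {(b, x). b \<in> S \<and> x \<in> {1..<m} \<and> sec m b [x] = a_two m} = 2"
    and S_triv: "\<forall>b\<in>S. \<forall>x\<in>{1..<m}. sec m b [x] \<noteq> a_cyc m \<and> sec m b [x] \<noteq> a_two m
                    \<longrightarrow> sec m b [x] = id"
  shows "\<not> periodic (gen (SymRooted m \<union> B))"
proof -
  define G where "G = gen (SymRooted m \<union> B)"
  define P1 where "P1 = {(b, x). b \<in> S \<and> x \<in> {1..<m} \<and> sec m b [x] = a_cyc m}"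
  define P2 where "P2 = {(b, x). b \<in> S \<and> x \<in> {1..<m} \<and> sec m b [x] = a_two m}"
  obtain pr where "P1 = {pr}" using S_cyc card_1_singletonE unfolding P1_def by blast
  then obtain b1 x1 where P1e: "P1 = {(b1, x1)}" by (cases pr) auto
  then have b1S: "b1 \<in> S" and x1: "x1 \<in> {1..<m}" and sb1: "sec m b1 [x1] = a_cyc m"
    unfolding P1_def by blast+
  have inP1: "\<And>s x. s \<in> S \<Longrightarrow> x \<in> {1..<m} \<Longrightarrow> sec m s [x] = a_cyc m \<Longrightarrow> (s, x) = (b1, x1)"
    using P1e unfolding P1_def by blast
  have SB: "\<And>s. s \<in> S \<Longrightarrow> s \<in> B" using B_gen gen_in by blast
  have aneq: "a_cyc m \<noteq> a_two m" "a_cyc m \<noteq> id" "a_two m \<noteq> id" using a_neq[OF m3] by auto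
  have cycR: "a_cyc m \<in> SymRooted m" using B_secA SB[OF b1S] x1 sb1 by metis
  have P2_iff: "\<And>s x. (s, x) \<in> P2 \<longleftrightarrow> s \<in> S \<and> x \<in> {1..<m} \<and> sec m s [x] = a_two m"
    unfolding P2_def by blast
  define ps where "ps s x = (if (s, x) = (b1, x1) then cc m else if (s, x) \<in> P2 then tt else id)" for s x
  have b1P2: "(b1, x1) \<notin> P2" using P2_iff sb1 aneq by auto
  have psm: "\<forall>x z. z<m \<longrightarrow> ps s x z < m" for s using m3 by (simp add: ps_def cc_lt tt_lt)
  have secps: "sec m s [x] v = rooted m (ps s x) v" if "s \<in> S" "x \<in> {1..<m}" "v \<in> words m" for s x v
  proof (cases "(s, x) = (b1, x1)")
    case True then show ?thesis using sb1 by (simp add: ps_def a_cyc_eq)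
  next
    case False
    show ?thesis
    proof (cases "(s, x) \<in> P2")
      case True
      then have "sec m s [x] = a_two m" using P2_iff by blast
      then show ?thesis using True False using ps_def a_two_eq by auto
    next
      case F2: False
      have "sec m s [x] \<noteq> a_cyc m" using inP1 that False by blast
      moreover have "sec m s [x] \<noteq> a_two m" using P2_iff F2 that by blast
      ultimately have "sec m s [x] = id" using S_triv that by blast
      then show ?thesis using False F2 that using ps_def rooted_idon by auto
    qed
  qed
  have bgS: "bgood m s (ps s)" if "s \<in> S" for s
  proof (rule bgood_of)
    show "s \<in> St1 m" using SB[OF that] B_St1 by blast
    show "sec m s [0] = s" using SB[OF that] B_sec0 by blast
    show "m > 0" using m3 by simp
    show "\<forall>x\<in>{1..<m}. \<forall>v\<in>words m. sec m s [x] v = rooted m (ps s x) v" using secps[OF that] by blast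
    show "\<forall>x z. z<m \<longrightarrow> ps s x z < m" using psm by blast
  qed
  have gS: "\<And>s. s \<in> S \<Longrightarrow> s \<in> gen S" using gen_in .
  have memG: "b \<circ> rooted m f \<in> G" if "b \<in> gen S" "rooted m f \<in> SymRooted m" for b f
  proof -
    have "rooted m f \<circ> id \<in> G" unfolding G_def
      by (rule gen.gen_mult[OF gen.gen_id]) (use that in auto)
    then have "b \<circ> (rooted m f \<circ> id) \<in> G" unfolding G_def
      by (rule gen.gen_mult) (use that B_gen in auto)
    then show ?thesis by simp
  qed
  have ccR: "rooted m (cc m) \<in> SymRooted m" using cycR a_cyc_eq by simp
  have ttR: "rooted m tt \<in> SymRooted m"
    unfolding SymRooted_def
  proof (intro CollectI exI conjI)
    show "rooted m tt = rooted m tt" ..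
    have "tt = transpose 0 1" by (auto simp: tt_def transpose_def)
    moreover have "transpose 0 1 permutes {..<m}" using m3 by (intro permutes_swap_id) auto
    ultimately show "tt permutes {..<m}" by simp
  qed
  have ttP: "tt permutes {..<m}"
  proof -
    have "tt = transpose 0 1" by (auto simp: tt_def transpose_def)
    moreover have "transpose 0 1 permutes {..<m}" using m3 by (intro permutes_swap_id) auto
    ultimately show "tt permutes {..<m}" by simp
  qed
  obtain sg where sg: "sg permutes {..<m}" "a_cyc m = rooted m sg" using cycR unfolding SymRooted_def by blast
  have "cc m = sg"
  proof
    fix z show "cc m z = sg z"
    proof (cases "z < m")
      case True
      have "rooted m (cc m) [z] = rooted m sg [z]" using sg(2) a_cyc_eq by simp
      then show ?thesis using True by (simp add: rooted_Cons)
    next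
      case False
      then show ?thesis using sg(1) by (simp add: cc_def permutes_def)
    qed
  qed
  then have ccP: "cc m permutes {..<m}" using sg by simp
  have tctR: "rooted m (tt \<circ> cc m \<circ> tt) \<in> SymRooted m"
    unfolding SymRooted_def using permutes_compose[OF permutes_compose[OF ttP ccP] ttP] by (auto simp: o_assoc)
  define NP where "NP b \<longleftrightarrow> noper (b \<circ> rooted m (cc m)) \<or> noper (b \<circ> rooted m tt)
                \<or> noper (b \<circ> rooted m (tt \<circ> cc m \<circ> tt))" for b
  have L: "\<exists>b\<in>gen S. NP b" if P2e: "P2 = {(b2, x2), (b3, x3)}" and d23: "(b2, x2) \<noteq> (b3, x3)"
    and ord: "x2 \<noteq> 1 \<longrightarrow> x3 \<noteq> 1 \<and> (b1 = b3 \<longrightarrow> b1 = b2)" for b2 x2 b3 x3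
  proof -
    have in2: "(b2, x2) \<in> P2" "(b3, x3) \<in> P2" using P2e by auto
    then have b2S: "b2 \<in> S" and x2r: "x2 \<in> {1..<m}" and b3S: "b3 \<in> S" and x3r: "x3 \<in> {1..<m}"
      using P2_iff by blast+
    have n12: "(b1, x1) \<noteq> (b2, x2)" "(b1, x1) \<noteq> (b3, x3)" using b1P2 in2 by auto
    have psv: "ps s x = (if (s, x) = (b1, x1) then cc m else if (s, x) = (b2, x2) \<or> (s, x) = (b3, x3) then tt else id)" for s x
      unfolding ps_def P2e by (simp only: insert_iff empty_iff simp_thms)
    have ps1: "ps b1 x1 = cc m" using psv by simp
    have ps2: "ps b2 x2 = tt" using psv n12 by metis
    have ps3: "ps b3 x3 = tt" using psv n12 by metis
    have pso: "ps s x = id" if "(s, x) \<noteq> (b1, x1)" "(s, x) \<noteq> (b2, x2)" "(s, x) \<noteq> (b3, x3)" for s x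
    proof -
      have c1: "\<not> ((s, x) = (b1, x1))" and c2: "\<not> ((s, x) = (b2, x2) \<or> (s, x) = (b3, x3))"
        using that by auto
      show ?thesis unfolding psv[of s x] if_not_P[OF c1] if_not_P[OF c2] ..
    qed
    show ?thesis
    proof (cases "x2 = 1")
      case True
      have "noper (b2 \<circ> rooted m tt)"
        by (rule case_t[OF bgS[OF b2S] m3]) (use ps2 True in simp)
      then show ?thesis using gS[OF b2S] NP_def by blast
    next
      case False
      then have x2g: "x2 \<in> {2..<m}" and x3g: "x3 \<in> {2..<m}" using x2r x3r ord by auto
      have bb: "b1 = b3 \<longrightarrow> b1 = b2" using ord False by blast
      consider "b1 \<noteq> b2 \<and> b1 \<noteq> b3" | "b1 = b2 \<and> b1 = b3" | "b1 = b2 \<and> b1 \<noteq> b3" using bb by blast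
      then show ?thesis
      proof cases
        case 1
        have "noper (b1 \<circ> rooted m (cc m))"
        proof (rule one_c[OF bgS[OF b1S] m3 x1])
          show "\<forall>z<m. ps b1 x1 z = cc m z" by (simp add: ps1 ps2 ps3 pso)
          show "\<forall>k\<in>{1..<m}. k \<noteq> x1 \<longrightarrow> (\<forall>z<m. ps b1 k z = z)" using 1 by (simp add: ps1 ps2 ps3 pso)
        qed
        then show ?thesis using gS[OF b1S] NP_def by blast
      next
        case 2
        then have d: "x2 \<noteq> x3" "x1 \<noteq> x2" "x1 \<noteq> x3" using d23 n12 by auto
        have tv: "\<forall>z<m. ps b1 x1 z = cc m z" "\<forall>z<m. ps b1 x2 z = tt z" "\<forall>z<m. ps b1 x3 z = tt z"
          "\<forall>k\<in>{1..<m}. k \<noteq> x1 \<and> k \<noteq> x2 \<and> k \<noteq> x3 \<longrightarrow> (\<forall>z<m. ps b1 k z = z)"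
        proof -
          have e: "b2 = b1" "b3 = b1" using 2 by auto
          have q2: "ps b1 x2 = tt" using ps2 e by simp
          have q3: "ps b1 x3 = tt" using ps3 e by simp
          have qo: "ps b1 k = id" if "k \<noteq> x1" "k \<noteq> x2" "k \<noteq> x3" for k
            using pso[of b1 k] that e by simp
          show "\<forall>z<m. ps b1 x1 z = cc m z" "\<forall>z<m. ps b1 x2 z = tt z" "\<forall>z<m. ps b1 x3 z = tt z"
            "\<forall>k\<in>{1..<m}. k \<noteq> x1 \<and> k \<noteq> x2 \<and> k \<noteq> x3 \<longrightarrow> (\<forall>z<m. ps b1 k z = z)"
            using ps1 q2 q3 qo by auto
        qed
        have "noper (b1 \<circ> rooted m (cc m)) \<or> noper (b1 \<circ> rooted m (tt \<circ> cc m \<circ> tt))"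
        proof (cases "x2 < x3")
          case True
          show ?thesis by (rule tri0[OF bgS[OF b1S] m3 x1 x2g x3g d(2,3) True tv]) 
        next
          case False
          then have "x3 < x2" using d by simp
          then show ?thesis using tri0[OF bgS[OF b1S] m3 x1 x3g x2g d(3,2) _ tv(1,3,2)] tv(4) by blast
        qed
        then show ?thesis using gS[OF b1S] NP_def by blast
      next
        case 3
        then have b32: "b3 \<noteq> b2" "b3 \<noteq> b1" and x12: "x1 \<noteq> x2" using n12 by auto
        have e: "b2 = b1" using 3 by simp
        have f1: "ps b1 k = (if k = x1 then cc m else if k = x2 then tt else id)" for k
          using ps1 ps2 pso[of b1 k] e b32 by auto
        have f3: "ps b3 k = (if k = x3 then tt else id)" for k
          using ps3 pso[of b3 k] e b32 by auto
        have g13: "b1 \<circ> b3 \<in> gen S" using gen_comp2[OF b1S b3S] .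
        have g31: "b3 \<circ> b1 \<in> gen S" using gen_comp2[OF b3S b1S] .
        have bg13: "bgood m (b1 \<circ> b3) (\<lambda>x. ps b1 x \<circ> ps b3 x)" using bgood_comp[OF bgS[OF b1S] bgS[OF b3S]] .
        have bg31: "bgood m (b3 \<circ> b1) (\<lambda>x. ps b3 x \<circ> ps b1 x)" using bgood_comp[OF bgS[OF b3S] bgS[OF b1S]] .
        consider "x3 = x2" | "x3 = x1" | "x3 \<noteq> x1 \<and> x3 \<noteq> x2" by blast
        then show ?thesis
        proof cases
          case 1
          have "noper ((b1 \<circ> b3) \<circ> rooted m (cc m))"
          proof (rule one_c[OF bg13 m3 x1])
            show "\<forall>z<m. (ps b1 x1 \<circ> ps b3 x1) z = cc m z" using x12 1 by (simp add: f1 f3)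
            show "\<forall>k\<in>{1..<m}. k \<noteq> x1 \<longrightarrow> (\<forall>z<m. (ps b1 k \<circ> ps b3 k) z = z)"
              using x12 1 by (simp add: f1 f3)
          qed
          then show ?thesis using g13 NP_def by blast
        next
          case c2: 2
          show ?thesis
          proof (cases "x2 < x1")
            case True
            have "noper ((b1 \<circ> b3) \<circ> rooted m (cc m))"
            proof (rule two_c[OF bg13 m3])
              show "0 < x2" "x2 < x1" "x1 < m" using x2g True x1 by auto
              show "\<forall>z<m. (ps b1 x1 \<circ> ps b3 x1) ((ps b1 x2 \<circ> ps b3 x2) z) = cc m z"
                using x12 c2 by (simp add: f1 f3 cc_lt)
              show "\<forall>k\<in>{1..<m}. k \<noteq> x2 \<and> k \<noteq> x1 \<longrightarrow> (\<forall>z<m. (ps b1 k \<circ> ps b3 k) z = z)"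
                using x12 c2 by (simp add: f1 f3 cc_lt)
            qed
            then show ?thesis using g13 NP_def by blast
          next
            case False
            then have lt: "x1 < x2" using x12 by simp
            have "noper ((b3 \<circ> b1) \<circ> rooted m (cc m))"
            proof (rule two_c[OF bg31 m3])
              show "0 < x1" "x1 < x2" "x2 < m" using x1 x2g lt by auto
              show "\<forall>z<m. (ps b3 x2 \<circ> ps b1 x2) ((ps b3 x1 \<circ> ps b1 x1) z) = cc m z"
                using x12 c2 by (simp add: f1 f3 cc_lt)
              show "\<forall>k\<in>{1..<m}. k \<noteq> x1 \<and> k \<noteq> x2 \<longrightarrow> (\<forall>z<m. (ps b3 k \<circ> ps b1 k) z = z)"
                using x12 c2 by (simp add: f1 f3 cc_lt)
            qed
            then show ?thesis using g31 NP_def by blast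
          qed
        next
          case c3: 3
          have d: "x2 \<noteq> x3" "x1 \<noteq> x2" "x1 \<noteq> x3" using c3 x12 by auto
          have tv: "\<forall>z<m. (ps b1 x1 \<circ> ps b3 x1) z = cc m z" "\<forall>z<m. (ps b1 x2 \<circ> ps b3 x2) z = tt z"
            "\<forall>z<m. (ps b1 x3 \<circ> ps b3 x3) z = tt z"
            "\<forall>k\<in>{1..<m}. k \<noteq> x1 \<and> k \<noteq> x2 \<and> k \<noteq> x3 \<longrightarrow> (\<forall>z<m. (ps b1 k \<circ> ps b3 k) z = z)"
            using d by (simp_all add: f1 f3)
          have "noper ((b1 \<circ> b3) \<circ> rooted m (cc m)) \<or> noper ((b1 \<circ> b3) \<circ> rooted m (tt \<circ> cc m \<circ> tt))"
          proof (cases "x2 < x3")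
            case True
            show ?thesis by (rule tri0[OF bg13 m3 x1 x2g x3g d(2,3) True tv])
          next
            case False
            then have "x3 < x2" using d by simp
            then show ?thesis using tri0[OF bg13 m3 x1 x3g x2g d(3,2) _ tv(1,3,2)] tv(4) by blast
          qed
          then show ?thesis using g13 NP_def by blast
        qed
      qed
    qed
  qed
  have "card P2 = 2" using S_two unfolding P2_def .
  then obtain pa pb where P2e: "P2 = {pa, pb}" and pab: "pa \<noteq> pb"
    unfolding card_2_iff by blast
  obtain b2 x2 where pa: "pa = (b2, x2)" by (cases pa) auto
  obtain b3 x3 where pb: "pb = (b3, x3)" by (cases pb) auto
  have E1: "P2 = {(b2, x2), (b3, x3)}" using P2e pa pb by simp
  have E2: "P2 = {(b3, x3), (b2, x2)}" using P2e pa pb by blast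
  have D1: "(b2, x2) \<noteq> (b3, x3)" using pab pa pb by simp
  have D2: "(b3, x3) \<noteq> (b2, x2)" using D1 by auto
  have "\<exists>b\<in>gen S. NP b"
  proof (cases "x2 = 1 \<or> x3 = 1")
    case True
    then show ?thesis
    proof (cases "x2 = 1")
      case True then show ?thesis by (intro L[OF E1 D1]) simp
    next
      case False
      then have "x3 = 1" using \<open>x2 = 1 \<or> x3 = 1\<close> by simp
      then show ?thesis by (intro L[OF E2 D2]) simp
    qed
  next
    case False
    then have n1: "x2 \<noteq> 1" "x3 \<noteq> 1" by auto
    show ?thesis
    proof (cases "b1 = b3 \<and> b1 \<noteq> b2")
      case True then show ?thesis by (intro L[OF E2 D2]) (use n1 in simp)
    next
      case F2: False then show ?thesis by (intro L[OF E1 D1]) (use n1 in blast)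
    qed
  qed
  then have key: "\<exists>b\<in>gen S. noper (b \<circ> rooted m (cc m)) \<or> noper (b \<circ> rooted m tt)
                \<or> noper (b \<circ> rooted m (tt \<circ> cc m \<circ> tt))" unfolding NP_def .
  then obtain b where "b \<in> gen S" "noper (b \<circ> rooted m (cc m)) \<or> noper (b \<circ> rooted m tt)
                \<or> noper (b \<circ> rooted m (tt \<circ> cc m \<circ> tt))" by blast
  then consider "noper (b \<circ> rooted m (cc m))" | "noper (b \<circ> rooted m tt)"
     | "noper (b \<circ> rooted m (tt \<circ> cc m \<circ> tt))" by blast
  then have "\<not> periodic G"
  proof cases
    case 1 show ?thesis by (rule noper_G[OF 1 memG[OF \<open>b \<in> gen S\<close> ccR]])
  next
    case 2 show ?thesis by (rule noper_G[OF 2 memG[OF \<open>b \<in> gen S\<close> ttR]])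
  next
    case 3 show ?thesis by (rule noper_G[OF 3 memG[OF \<open>b \<in> gen S\<close> tctR]])
  qed
  then show ?thesis unfolding G_def .
qed

end
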